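(* Let $r_1, r_2 \geq 2$ be integers. Suppose that for each $i\in\{1,2\}$ the inequality $$\chi\big(KG^{r_i}(n,k,s)\big) \geq \left\lceil \frac{n - r_i(k-s-1)}{r_i-1} \right\rceil$$ holds for all non-negative integers $n,k,s$ satisfying $n \geq r_i(k-1)+1$ and $k > s \geq 0$. Then $$\chi\big(KG^{r_1 r_2}(n,k,s)\big) \geq \left\lceil \frac{n - r_1 r_2(k-s-1)}{r_1 r_2-1} \right\rceil$$ holds for all non-negative integers $n,k,s$ satisfying $n \geq r_1 r_2(k-1)+1$ and $k > s \geq 0$.
   Context: For a positive integer $n$, $[n]=\{1,\ldots,n\}$. A hypergraph $\mathcal{H}=(V,E)$ consists of a finite vertex set $V$ and a set $E$ of non-empty subsets of $V$ (edges). A proper $m$-coloring of $\mathcal{H}$ is a map $c:V\to\{1,\ldots,m\}$ such that no edge is monochromatic, i.e. $|c(e)|\geq 2$ for every edge $e$. The chromatic number $\chi(\mathcal{H})$ is the least $m$ for which a proper $m$-coloring exists. The generalized Kneser hypergraph $KG^{r}(n,k,s)$ has as vertices all $k$-element subsets of $[n]$, and its edges are the sets $\{X_1,\ldots,X_r\}$ of $r$ distinct vertices such that $|X_i\cap X_j|\leq s$ for all $i\neq j$. *)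

theory Defs
  imports Complex_Main
begin

definition proper_coloring :: "'a set \<Rightarrow> 'a set set \<Rightarrow> nat \<Rightarrow> ('a \<Rightarrow> nat) \<Rightarrow> bool" where
  "proper_coloring V E m c \<longleftrightarrow> (\<forall>v\<in>V. c v \<in> {1..m}) \<and> (\<forall>e\<in>E. card (c ` e) \<ge> 2)"

definition chromatic_number :: "'a set \<Rightarrow> 'a set set \<Rightarrow> nat" where
  "chromatic_number V E = (LEAST m. \<exists>c. proper_coloring V E m c)"

definition kneser_vertices :: "nat \<Rightarrow> nat \<Rightarrow> nat set set" where
  "kneser_vertices n k = {X. X \<subseteq> {1..n} \<and> card X = k}"

definition kneser_edges :: "nat \<Rightarrow> nat \<Rightarrow> nat \<Rightarrow> nat \<Rightarrow> nat set set set" where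
  "kneser_edges r n k s = {E. E \<subseteq> kneser_vertices n k \<and> card E = r \<and>
      (\<forall>X\<in>E. \<forall>Y\<in>E. X \<noteq> Y \<longrightarrow> card (X \<inter> Y) \<le> s)}"

definition chi_KG :: "nat \<Rightarrow> nat \<Rightarrow> nat \<Rightarrow> nat \<Rightarrow> nat" where
  "chi_KG r n k s = chromatic_number (kneser_vertices n k) (kneser_edges r n k s)"

end

theory Submission
  imports Defs
begin


lemma chi_le: "proper_coloring V E m c \<Longrightarrow> chromatic_number V E \<le> m"
  unfolding chromatic_number_def by (rule Least_le) blast

lemma kv_finite: "finite (kneser_vertices n k)"
  unfolding kneser_vertices_def by (rule finite_subset[of _ "Pow {1..n}"]) auto

lemma chi_ex:
  assumes "r \<ge> 2"
  shows "\<exists>c. proper_coloring (kneser_vertices n k) (kneser_edges r n k s) (chi_KG r n k s) c"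
proof -
  let ?V = "kneser_vertices n k"
  obtain f where f: "bij_betw f ?V {0..<card ?V}" using ex_bij_betw_finite_nat[OF kv_finite] by blast
  have "proper_coloring ?V (kneser_edges r n k s) (card ?V) (\<lambda>x. f x + 1)"
    unfolding proper_coloring_def
  proof safe
    fix v assume "v \<in> ?V" hence "f v \<in> {0..<card ?V}" using f bij_betwE by blast
    thus "f v + 1 \<in> {1..card ?V}" by auto
  next
    fix e assume e: "e \<in> kneser_edges r n k s"
    hence sub: "e \<subseteq> ?V" and ce: "card e = r" unfolding kneser_edges_def by auto
    have "inj_on (\<lambda>x. f x + 1) e" using f sub by (auto simp: bij_betw_def inj_on_def)
    hence "card ((\<lambda>x. f x + 1) ` e) = r" using ce card_image by metis
    thus "2 \<le> card ((\<lambda>x. f x + 1) ` e)" using assms by simp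
  qed
  hence "\<exists>m c. proper_coloring ?V (kneser_edges r n k s) m c" by blast
  thus ?thesis unfolding chi_KG_def chromatic_number_def by (rule LeastI_ex)
qed



definition mono_fam where
  "mono_fam n k s r c Y i F \<longleftrightarrow> F \<subseteq> kneser_vertices n k \<and> (\<forall>A\<in>F. A \<subseteq> Y) \<and> card F = r \<and>
     (\<forall>A\<in>F. \<forall>B\<in>F. A \<noteq> B \<longrightarrow> card (A \<inter> B) \<le> s) \<and> (\<forall>A\<in>F. c A = i)"

lemma inner:
  assumes col: "\<forall>v\<in>kneser_vertices n k. c v \<in> {1..m}"
    and Y: "Y \<subseteq> {1..n}" "card Y = K" and Z: "Z \<subseteq> Y" "card Z = t"
    and ts: "t \<le> s" "s < k" and r: "r \<ge> 1"
    and chi: "chi_KG r (K - t) (k - t) (s - t) > m"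
  shows "\<exists>i\<in>{1..m}. \<exists>F. mono_fam n k s r c Y i F"
proof -
  have finY: "finite Y" using Y(1) finite_subset by blast
  have finZ: "finite Z" using Z(1) finY finite_subset by blast
  have cYZ: "card (Y - Z) = K - t" using Y Z finZ by (simp add: card_Diff_subset)
  obtain g where g: "bij_betw g {1..K - t} (Y - Z)"
    using finite_same_card_bij[of "{1..K-t}" "Y - Z"] cYZ finY by auto
  have ginj: "inj_on g {1..K-t}" and gimg: "g ` {1..K-t} = Y - Z" using g by (auto simp: bij_betw_def)
  define \<phi> where "\<phi> B = Z \<union> g ` B" for B
  define c' where "c' B = c (\<phi> B)" for B
  have phiV: "\<phi> B \<in> kneser_vertices n k" if "B \<in> kneser_vertices (K - t) (k - t)" for B
  proof -
    have B: "B \<subseteq> {1..K-t}" "card B = k - t" using that by (auto simp: kneser_vertices_def)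
    have "g ` B \<subseteq> Y - Z" using B gimg by blast
    moreover have "card (g ` B) = k - t" using B ginj by (metis card_image inj_on_subset)
    ultimately have "card (\<phi> B) = t + (k - t)" unfolding \<phi>_def using Z finZ
      by (subst card_Un_disjoint) (auto intro: finite_subset[OF _ finY])
    moreover have "\<phi> B \<subseteq> {1..n}" unfolding \<phi>_def using \<open>g ` B \<subseteq> Y - Z\<close> Z Y by blast
    ultimately show ?thesis using ts by (auto simp: kneser_vertices_def)
  qed
  have phiY: "\<phi> B \<subseteq> Y" if "B \<subseteq> {1..K-t}" for B unfolding \<phi>_def using that gimg Z by blast
  have phiInt: "\<phi> B \<inter> \<phi> B' = Z \<union> g ` (B \<inter> B')" if "B \<subseteq> {1..K-t}" "B' \<subseteq> {1..K-t}" for B B'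
  proof -
    have "g ` (B \<inter> B') = g ` B \<inter> g ` B'"
      using ginj that by (meson inj_on_image_Int)
    moreover have "g ` B \<inter> Z = {}" "g ` B' \<inter> Z = {}" using that gimg by blast+
    ultimately show ?thesis unfolding \<phi>_def by blast
  qed
  have phiinj: "inj_on \<phi> (Pow {1..K-t})"
  proof (rule inj_onI)
    fix B B' assume "B \<in> Pow {1..K-t}" "B' \<in> Pow {1..K-t}" "\<phi> B = \<phi> B'"
    moreover have "g ` B \<inter> Z = {}" "g ` B' \<inter> Z = {}" using calculation gimg by blast+
    ultimately have "g ` B = g ` B'" unfolding \<phi>_def by blast
    thus "B = B'" using ginj \<open>B \<in> _\<close> \<open>B' \<in> _\<close> by (meson PowD inj_on_image_eq_iff)
  qed
  have "\<not> proper_coloring (kneser_vertices (K - t) (k - t)) (kneser_edges r (K - t) (k - t) (s - t)) m c'"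
    using chi_le chi unfolding chi_KG_def by fastforce
  moreover have "\<forall>v\<in>kneser_vertices (K - t) (k - t). c' v \<in> {1..m}"
    using col phiV unfolding c'_def by blast
  ultimately obtain E where E: "E \<in> kneser_edges r (K - t) (k - t) (s - t)" "card (c' ` E) < 2"
    unfolding proper_coloring_def by force
  have Esub: "E \<subseteq> kneser_vertices (K - t) (k - t)" and cE: "card E = r"
    and Epw: "\<forall>X\<in>E. \<forall>Y\<in>E. X \<noteq> Y \<longrightarrow> card (X \<inter> Y) \<le> s - t"
    using E(1) unfolding kneser_edges_def by auto
  have finE: "finite E" using Esub kv_finite finite_subset by blast
  have "E \<noteq> {}" using cE r by auto
  then obtain B0 where B0: "B0 \<in> E" by blast
  have "card (c' ` E) \<noteq> 0" using finE B0 by auto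
  hence "card (c' ` E) = 1" using E(2) by linarith
  then obtain i where ci: "c' ` E = {i}" using card_1_singletonE by blast
  have EP: "E \<subseteq> Pow {1..K-t}" using Esub by (auto simp: kneser_vertices_def)
  define F where "F = \<phi> ` E"
  have "i \<in> {1..m}" using ci B0 Esub col phiV unfolding c'_def by force
  moreover have "mono_fam n k s r c Y i F"
    unfolding mono_fam_def
  proof (intro conjI ballI impI)
    show "F \<subseteq> kneser_vertices n k" using phiV Esub F_def by blast
    show "A \<subseteq> Y" if "A \<in> F" for A using that phiY EP F_def by blast
    show "card F = r" unfolding F_def using cE card_image inj_on_subset[OF phiinj EP] by metis
    show "c A = i" if "A \<in> F" for A using that ci F_def c'_def by force
    fix A A' assume "A \<in> F" "A' \<in> F" "A \<noteq> A'"
    then obtain B B' where BB: "B \<in> E" "B' \<in> E" "A = \<phi> B" "A' = \<phi> B'" "B \<noteq> B'" unfolding F_def by blast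
    have Bs: "B \<subseteq> {1..K-t}" "B' \<subseteq> {1..K-t}" using BB EP by auto
    have "card (A \<inter> A') = card (Z \<union> g ` (B \<inter> B'))" using phiInt Bs BB by simp
    also have "\<dots> \<le> card Z + card (g ` (B \<inter> B'))" by (rule card_Un_le)
    also have "\<dots> \<le> t + card (B \<inter> B')" using Z card_image_le[of "B \<inter> B'" g] Bs finite_subset[of "B \<inter> B'" "{1..K-t}"] by auto
    also have "\<dots> \<le> t + (s - t)" using Epw BB by auto
    finally show "card (A \<inter> A') \<le> s" using ts by simp
  qed
  ultimately show ?thesis by blast
qed



lemma outer:
  assumes c: "proper_coloring (kneser_vertices n k) (kneser_edges (r1 * r2) n k s) m c"
    and sk: "s < k" and r1: "r1 \<ge> 1"
    and mono: "\<And>Y. Y \<subseteq> {1..n} \<Longrightarrow> card Y = K \<Longrightarrow> \<exists>i\<in>{1..m}. \<exists>F. mono_fam n k s r2 c Y i F"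
  shows "chi_KG r1 n K s \<le> m"
proof -
  define Q where "Q Y i \<longleftrightarrow> i \<in> {1..m} \<and> (\<exists>F. mono_fam n k s r2 c Y i F)" for Y i
  define d where "d Y = (SOME i. Q Y i)" for Y
  have dQ: "Q Y (d Y)" if "Y \<in> kneser_vertices n K" for Y
  proof -
    have "\<exists>i. Q Y i" using mono[of Y] that unfolding Q_def kneser_vertices_def by blast
    thus ?thesis unfolding d_def by (rule someI_ex)
  qed
  have "proper_coloring (kneser_vertices n K) (kneser_edges r1 n K s) m d"
    unfolding proper_coloring_def
  proof (intro conjI ballI)
    show "d v \<in> {1..m}" if "v \<in> kneser_vertices n K" for v using dQ[OF that] Q_def by blast
    fix e assume e: "e \<in> kneser_edges r1 n K s"
    have esub: "e \<subseteq> kneser_vertices n K" and ce: "card e = r1"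
      and epw: "\<forall>X\<in>e. \<forall>Y\<in>e. X \<noteq> Y \<longrightarrow> card (X \<inter> Y) \<le> s"
      using e unfolding kneser_edges_def by auto
    have fine: "finite e" using esub kv_finite finite_subset by blast
    show "2 \<le> card (d ` e)"
    proof (rule ccontr)
      assume "\<not> 2 \<le> card (d ` e)"
      have "e \<noteq> {}" using ce r1 by auto
      then obtain Y0 where Y0: "Y0 \<in> e" by blast
      have "card (d ` e) \<noteq> 0" using fine Y0 by auto
      hence "card (d ` e) = 1" using \<open>\<not> 2 \<le> card (d ` e)\<close> by linarith
      then obtain i where di: "d ` e = {i}" using card_1_singletonE by blast
      define Fs where "Fs Y = (SOME F. mono_fam n k s r2 c Y i F)" for Y
      have Fs: "mono_fam n k s r2 c Y i (Fs Y)" if "Y \<in> e" for Y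
      proof -
        have "Q Y i" using dQ[of Y] that esub di by force
        thus ?thesis unfolding Fs_def Q_def by (meson someI)
      qed
      define U where "U = (\<Union>Y\<in>e. Fs Y)"
      have finY: "finite Y" if "Y \<in> e" for Y
        using that esub by (auto simp: kneser_vertices_def intro: finite_subset)
      have disj: "Fs Y \<inter> Fs Y' = {}" if "Y \<in> e" "Y' \<in> e" "Y \<noteq> Y'" for Y Y'
      proof (rule ccontr)
        assume "Fs Y \<inter> Fs Y' \<noteq> {}"
        then obtain A where A: "A \<in> Fs Y" "A \<in> Fs Y'" by blast
        have m1: "mono_fam n k s r2 c Y i (Fs Y)" "mono_fam n k s r2 c Y' i (Fs Y')" using Fs that by auto
        have "A \<subseteq> Y" "A \<subseteq> Y'" using A m1 unfolding mono_fam_def by auto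
        hence AY: "A \<subseteq> Y \<inter> Y'" by blast
        have "A \<in> kneser_vertices n k" using A m1 unfolding mono_fam_def by auto
        hence "card A = k" unfolding kneser_vertices_def by simp
        moreover have "card A \<le> card (Y \<inter> Y')" using AY finY[OF that(1)] by (intro card_mono) auto
        moreover have "card (Y \<inter> Y') \<le> s" using epw that by blast
        ultimately show False using sk by linarith
      qed
      have finF: "finite (Fs Y)" if "Y \<in> e" for Y
      proof -
        have "Fs Y \<subseteq> kneser_vertices n k" using Fs[OF that] unfolding mono_fam_def by blast
        thus ?thesis using kv_finite[of n k] by (rule finite_subset)
      qed
      have "card U = (\<Sum>Y\<in>e. card (Fs Y))" unfolding U_def
        by (rule card_UN_disjoint[OF fine]) (use finF disj in auto)
      also have "\<dots> = (\<Sum>Y\<in>e. r2)" using Fs unfolding mono_fam_def by (intro sum.cong) auto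
      also have "\<dots> = r1 * r2" using ce by simp
      finally have cU: "card U = r1 * r2" .
      have Usub: "U \<subseteq> kneser_vertices n k"
      proof
        fix A assume "A \<in> U"
        then obtain Y where "Y \<in> e" "A \<in> Fs Y" unfolding U_def by blast
        thus "A \<in> kneser_vertices n k" using Fs[of Y] unfolding mono_fam_def by blast
      qed
      have Upw: "\<forall>A\<in>U. \<forall>B\<in>U. A \<noteq> B \<longrightarrow> card (A \<inter> B) \<le> s"
      proof (intro ballI impI)
        fix A B assume AB: "A \<in> U" "B \<in> U" "A \<noteq> B"
        then obtain Y Y' where YY: "Y \<in> e" "Y' \<in> e" "A \<in> Fs Y" "B \<in> Fs Y'" unfolding U_def by blast
        have m1: "mono_fam n k s r2 c Y i (Fs Y)" "mono_fam n k s r2 c Y' i (Fs Y')" using Fs YY by auto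
        show "card (A \<inter> B) \<le> s"
        proof (cases "Y = Y'")
          case True thus ?thesis using m1 YY AB unfolding mono_fam_def by blast
        next
          case False
          have "A \<subseteq> Y" "B \<subseteq> Y'" using m1 YY unfolding mono_fam_def by auto
          hence "A \<inter> B \<subseteq> Y \<inter> Y'" by blast
          hence "card (A \<inter> B) \<le> card (Y \<inter> Y')" using finY[OF YY(1)] by (intro card_mono) auto
          moreover have "card (Y \<inter> Y') \<le> s" using epw YY False by blast
          ultimately show ?thesis by linarith
        qed
      qed
      have "U \<in> kneser_edges (r1 * r2) n k s"
        unfolding kneser_edges_def using Usub Upw cU by blast
      hence "2 \<le> card (c ` U)" using c unfolding proper_coloring_def by blast
      moreover have "c ` U \<subseteq> {i}"
      proof
        fix x assume "x \<in> c ` U"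
        then obtain A Y where "Y \<in> e" "A \<in> Fs Y" "x = c A" unfolding U_def by blast
        thus "x \<in> {i}" using Fs[of Y] unfolding mono_fam_def by auto
      qed
      hence "card (c ` U) \<le> card {i}" by (intro card_mono) auto
      ultimately show False by simp
    qed
  qed
  thus ?thesis unfolding chi_KG_def by (rule chi_le)
qed



lemma arith_case2:
  fixes m s q t r1 r2 :: nat
  assumes r1: "r1 \<ge> 2" and r2: "r2 \<ge> 2"
    and q: "q * r2 \<le> m * (r2 - 1)" "m * (r2 - 1) < (q + 1) * r2"
    and t: "t = s - min s q"
    and h1: "m * (r1 * r2 - 1) < r1 * (m * (r2 - 1)) + r1 * t"
    and h2: "r1 * r2 * s + 1 \<le> r1 * (m * (r2 - 1)) + r1 * t"
  shows False
proof -
  obtain a b where ab: "r1 = a + 2" "r2 = b + 2" using r1 r2 by (metis add.commute le_Suc_ex)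
  have e1: "r1 * r2 - 1 = (a + 1) + (a + 2) * (b + 1)" unfolding ab by (simp add: algebra_simps)
  have h1': "m * (a + 1) < (a + 2) * t" using h1 unfolding e1 unfolding ab by (simp add: algebra_simps)
  have "t > 0" using h1' by (cases t) auto
  hence tq: "s = q + t" using t by auto
  have h2': "(a + 2) * ((b + 1) * (q + t) + q) + (a + 2) * t + 1 \<le> (a + 2) * (m * (b + 1)) + (a + 2) * t"
    using h2 unfolding tq ab by (simp add: algebra_simps)
  hence "(a + 2) * ((b + 1) * (q + t) + q) < (a + 2) * (m * (b + 1))" by linarith
  hence "(b + 1) * (q + t) + q < m * (b + 1)" by (meson mult_less_cancel1)
  hence "(b + 1) * (q + t) < (b + 1) * m" by (simp add: mult.commute)
  hence sm: "q + t < m" by (meson mult_less_cancel1)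
  hence "t + q + 1 \<le> m" by simp
  hence "(a + 2) * (t + q + 1) \<le> (a + 2) * m" by (rule mult_le_mono2)
  hence A: "(a + 2) * (q + 1) < m" using h1' by (simp add: algebra_simps)
  have q2: "m * (b + 1) < (q + 1) * (b + 2)" using q(2) ab by simp
  have "(a + 2) * (m * (b + 1)) < (a + 2) * ((q + 1) * (b + 2))" using q2 by (intro mult_strict_left_mono) auto
  also have "\<dots> = ((a + 2) * (q + 1)) * (b + 2)" by (simp add: algebra_simps)
  also have "\<dots> < m * (b + 2)" using A by (intro mult_strict_right_mono) auto
  finally have "((a + 2) * (b + 1)) * m < (b + 2) * m" by (simp add: algebra_simps)
  hence "(a + 2) * (b + 1) < b + 2" by (meson mult_less_cancel2)
  thus False by (simp add: algebra_simps)
qed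

lemma arith_case1:
  fixes n m K k s t r1 r2 :: nat
  assumes r1: "r1 \<ge> 2" and r2: "r2 \<ge> 2" and ts: "t \<le> s"
    and K: "K = m * (r2 - 1) + r2 * (k - s - 1) + t + 1"
    and h: "n \<le> m * (r1 - 1) + r1 * (K - s - 1)"
  shows "n \<le> m * (r1 * r2 - 1) + r1 * r2 * (k - s - 1)"
proof -
  obtain a b where ab: "r1 = a + 2" "r2 = b + 2" using r1 r2 by (metis add.commute le_Suc_ex)
  have "K - s - 1 \<le> m * (r2 - 1) + r2 * (k - s - 1)" using K ts by linarith
  hence "r1 * (K - s - 1) \<le> r1 * (m * (r2 - 1) + r2 * (k - s - 1))" by (rule mult_le_mono2)
  hence "n \<le> m * (r1 - 1) + r1 * (m * (r2 - 1) + r2 * (k - s - 1))" using h by linarith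
  also have "\<dots> = m * (r1 * r2 - 1) + r1 * r2 * (k - s - 1)"
  proof -
    define j where "j = k - s - 1"
    have "m * (r1 - 1) + r1 * (m * (r2 - 1) + r2 * j) = m * (r1 * r2 - 1) + r1 * r2 * j"
      unfolding ab by (simp add: algebra_simps)
    thus ?thesis unfolding j_def .
  qed
  finally show ?thesis .
qed

theorem lemma3:
  fixes r1 r2 :: nat
  assumes "r1 \<ge> 2" and "r2 \<ge> 2"
    and "\<forall>n k s. n \<ge> r1 * (k - 1) + 1 \<and> k > s \<longrightarrow>
           int (chi_KG r1 n k s) \<ge>
             \<lceil>(real n - real r1 * (real k - real s - 1)) / (real r1 - 1)\<rceil>"
    and "\<forall>n k s. n \<ge> r2 * (k - 1) + 1 \<and> k > s \<longrightarrow>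
           int (chi_KG r2 n k s) \<ge>
             \<lceil>(real n - real r2 * (real k - real s - 1)) / (real r2 - 1)\<rceil>"
  shows "\<forall>n k s. n \<ge> r1 * r2 * (k - 1) + 1 \<and> k > s \<longrightarrow>
           int (chi_KG (r1 * r2) n k s) \<ge>
             \<lceil>(real n - real (r1 * r2) * (real k - real s - 1)) / (real (r1 * r2) - 1)\<rceil>"
proof (intro allI impI)
  fix n k s assume H: "n \<ge> r1 * r2 * (k - 1) + 1 \<and> k > s"
  have nk: "n \<ge> r1 * r2 * (k - 1) + 1" and sk: "s < k" using H by auto
  have r1: "r1 \<ge> 2" and r2: "r2 \<ge> 2" using assms by auto
  have hyp1: "\<And>n k s. n \<ge> r1 * (k - 1) + 1 \<Longrightarrow> k > s \<Longrightarrow> int (chi_KG r1 n k s) \<ge>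
             \<lceil>(real n - real r1 * (real k - real s - 1)) / (real r1 - 1)\<rceil>" using assms(3) by blast
  have hyp2: "\<And>n k s. n \<ge> r2 * (k - 1) + 1 \<Longrightarrow> k > s \<Longrightarrow> int (chi_KG r2 n k s) \<ge>
             \<lceil>(real n - real r2 * (real k - real s - 1)) / (real r2 - 1)\<rceil>" using assms(4) by blast
  define m where "m = chi_KG (r1 * r2) n k s"
  have rr0: "r1 * r2 \<ge> 2" using mult_le_mono[of 2 r1 1 r2] r1 r2 by simp
  then obtain c where c: "proper_coloring (kneser_vertices n k) (kneser_edges (r1 * r2) n k s) m c"
    using chi_ex unfolding m_def by blast
  have key: "n \<le> m * (r1 * r2 - 1) + r1 * r2 * (k - s - 1)"
  proof (rule ccontr)
    assume nbig: "\<not> ?thesis"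
    define q where "q = m * (r2 - 1) div r2"
    define t where "t = s - min s q"
    define K where "K = m * (r2 - 1) + r2 * (k - s - 1) + t + 1"
    have ts: "t \<le> s" unfolding t_def by simp
    have qdef: "q * r2 \<le> m * (r2 - 1)" "m * (r2 - 1) < (q + 1) * r2"
    proof -
      have e: "m * (r2 - 1) = q * r2 + m * (r2 - 1) mod r2" unfolding q_def by simp
      have "m * (r2 - 1) mod r2 < r2" using r2 by simp
      thus "q * r2 \<le> m * (r2 - 1)" "m * (r2 - 1) < (q + 1) * r2" using e by (linarith, simp)
    qed
    have smt: "s - t = min s q" unfolding t_def by simp
    have "r2 * (s - t) \<le> r2 * q" unfolding smt by (intro mult_le_mono2) simp
    also have "r2 * q = q * r2" by (rule mult.commute)
    finally have stq: "r2 * (s - t) \<le> m * (r2 - 1)" using qdef(1) by linarith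
    have "s - t \<le> q" using smt by simp
    also have "q \<le> q * r2" using r2 by simp
    finally have "s - t \<le> m * (r2 - 1)" using qdef(1) by linarith
    have Ks: "K > s" using \<open>s - t \<le> m * (r2 - 1)\<close> unfolding K_def by linarith
    have mono: "\<exists>i\<in>{1..m}. \<exists>F. mono_fam n k s r2 c Y i F" if Y: "Y \<subseteq> {1..n}" "card Y = K" for Y
    proof -
      have "t \<le> card Y" using Y(2) unfolding K_def by linarith
      then obtain Z where Z: "Z \<subseteq> Y" "card Z = t" by (rule obtain_subset_with_card_n)
      have chiK: "chi_KG r2 (K - t) (k - t) (s - t) > m"
      proof -
      define j where "j = k - s - 1"
      have Kt: "K - t = m * (r2 - 1) + r2 * j + 1" unfolding K_def j_def by simp
      have ktj: "k - t - 1 = j + (s - t)" unfolding j_def using ts sk by simp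
      have "r2 * (k - t - 1) = r2 * j + r2 * (s - t)" unfolding ktj by (simp add: distrib_left)
      hence pre: "K - t \<ge> r2 * (k - t - 1) + 1" using stq Kt by linarith
      have "k - t > s - t" using ts sk by simp
      from hyp2[OF pre this]
      have h: "int (chi_KG r2 (K - t) (k - t) (s - t)) \<ge>
             \<lceil>(real (K - t) - real r2 * (real (k - t) - real (s - t) - 1)) / (real r2 - 1)\<rceil>" .
      have A: "real (k - t) - real (s - t) - 1 = real j" unfolding j_def using ts sk by (simp add: of_nat_diff)
      have B: "real (K - t) = real m * (real r2 - 1) + real r2 * real j + 1"
        unfolding Kt using r2 by (simp add: of_nat_diff)
      have "(real (K - t) - real r2 * (real (k - t) - real (s - t) - 1)) / (real r2 - 1)
          = (real m * (real r2 - 1) + real r2 * real j + 1 - real r2 * real j) / (real r2 - 1)"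
        by (simp only: A B)
      also have "\<dots> = (real m * (real r2 - 1) + 1) / (real r2 - 1)" by simp
      also have "\<dots> = real m + 1 / (real r2 - 1)" using r2 by (simp add: field_simps)
      finally have "real m < (real (K - t) - real r2 * (real (k - t) - real (s - t) - 1)) / (real r2 - 1)"
        using r2 by simp
      hence "int m < \<lceil>(real (K - t) - real r2 * (real (k - t) - real (s - t) - 1)) / (real r2 - 1)\<rceil>"
        by (simp add: less_ceiling_iff)
      thus ?thesis using h by linarith
      qed
      have col: "\<forall>v\<in>kneser_vertices n k. c v \<in> {1..m}" using c unfolding proper_coloring_def by blast
      have r21: "r2 \<ge> 1" using r2 by linarith
      show ?thesis by (rule inner[OF col Y(1) Y(2) Z(1) Z(2) ts sk r21 chiK])
    qed
    have r11: "r1 \<ge> 1" using r1 by linarith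
    have chi1: "chi_KG r1 n K s \<le> m" by (rule outer[OF c sk r11 mono])
    show False
    proof (cases "n \<ge> r1 * (K - 1) + 1")
      case True
      have hh: "int (chi_KG r1 n K s) \<ge> \<lceil>(real n - real r1 * (real K - real s - 1)) / (real r1 - 1)\<rceil>"
        using hyp1[OF True Ks] .
      hence "\<lceil>(real n - real r1 * (real K - real s - 1)) / (real r1 - 1)\<rceil> \<le> int m" using chi1 by linarith
      hence "(real n - real r1 * (real K - real s - 1)) / (real r1 - 1) \<le> real m"
        by (simp add: ceiling_le_iff)
      hence X: "real n - real r1 * (real K - real s - 1) \<le> real m * (real r1 - 1)"
        using r1 by (simp add: pos_divide_le_eq)
      have eA: "real K - real s - 1 = real (K - s - 1)" using Ks by (simp add: of_nat_diff)
      have eB: "real r1 - 1 = real (r1 - 1)" using r1 by (simp add: of_nat_diff)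
      have "real n - real r1 * real (K - s - 1) \<le> real m * real (r1 - 1)" using X by (simp only: eA eB)
      hence "real n \<le> real m * real (r1 - 1) + real r1 * real (K - s - 1)" by linarith
      hence "real n \<le> real (m * (r1 - 1) + r1 * (K - s - 1))" by (simp only: of_nat_add of_nat_mult)
      hence "n \<le> m * (r1 - 1) + r1 * (K - s - 1)" by linarith
      from arith_case1[OF r1 r2 ts K_def this] nbig show False by (rule notE[rotated])
    next
      case False
      hence "n \<le> r1 * (K - 1)" by simp
      define j where "j = k - s - 1"
      have e1: "r1 * (K - 1) = r1 * (m * (r2 - 1)) + r1 * r2 * j + r1 * t"
        unfolding K_def j_def by (simp add: distrib_left mult.assoc)
      have e2: "r1 * r2 * (k - 1) = r1 * r2 * j + r1 * r2 * s"
      proof -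
        have "k - 1 = j + s" unfolding j_def using sk by simp
        thus ?thesis by (simp add: distrib_left)
      qed
      have h1: "m * (r1 * r2 - 1) < r1 * (m * (r2 - 1)) + r1 * t"
        using nbig \<open>n \<le> r1 * (K - 1)\<close> e1 unfolding j_def by linarith
      have h2: "r1 * r2 * s + 1 \<le> r1 * (m * (r2 - 1)) + r1 * t"
        using nk \<open>n \<le> r1 * (K - 1)\<close> e1 e2 by linarith
      show False using arith_case2[OF r1 r2 qdef t_def h1 h2] .
    qed
  qed
  show "int (chi_KG (r1 * r2) n k s) \<ge>
             \<lceil>(real n - real (r1 * r2) * (real k - real s - 1)) / (real (r1 * r2) - 1)\<rceil>"
  proof -
    have rr: "r1 * r2 \<ge> 2" by (rule rr0)
    have a: "real k - real s - 1 = real (k - s - 1)" using sk by (simp add: of_nat_diff)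
    have "1 \<le> r1 * r2" using rr by linarith
    hence "real (r1 * r2 - 1) = real (r1 * r2) - real (1::nat)" by (rule of_nat_diff)
    hence b: "real (r1 * r2) - 1 = real (r1 * r2 - 1)" by simp
    have "real n \<le> real m * real (r1 * r2 - 1) + real (r1 * r2) * real (k - s - 1)"
      using key by (metis of_nat_add of_nat_le_iff of_nat_mult)
    hence "real n - real (r1 * r2) * (real k - real s - 1) \<le> real m * (real (r1 * r2) - 1)"
      unfolding a b by linarith
    hence "(real n - real (r1 * r2) * (real k - real s - 1)) / (real (r1 * r2) - 1) \<le> real m"
    proof -
      have "real (r1 * r2) \<ge> 2" using rr by (metis of_nat_le_iff of_nat_numeral)
      hence pos: "real (r1 * r2) - 1 > 0" by linarith
      show ?thesis using pos_divide_le_eq[OF pos] \<open>real n - _ \<le> _\<close> by blast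
    qed
    thus ?thesis unfolding m_def by (simp add: ceiling_le_iff)
  qed
qed


end
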